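(* Let $\mathbb T$ be an arbitrary parameter set and let $X=\{X(t),t\in\mathbb T\}$ be a centered Gaussian process such that $m(\mathbb T):=\sup_{t\in\mathbb T}\left(\mathbb E|X(t)|^2\right)^{1/2}<\infty$, the pseudometric space $(\mathbb T,\rho_X)$ is separable, and $X$ is separable on $(\mathbb T,\rho_X)$, where $\rho_X(t,s)=\left(\mathbb E(X(t)-X(s))^2\right)^{1/2}$. Let $r:[1,\infty)\to[0,\infty)$ be nondecreasing and such that $y\mapsto r(e^y)$, $y\ge0$, is convex. Put $I_r(x)=\int_0^x r(N(v))\,dv$ for $x>0$, and assume $I_r(m(\mathbb T))<\infty$. Then: (i) for any $\theta\in(0,1)$ and any $\lambda>0$, \[ \mathbb E\exp\Big\{\lambda\sup_{t\in\mathbb T}|X(t)|\Big\}\le 2\exp\Big\{\frac{\lambda^2m^2(\mathbb T)}{2(1-\theta)^2}\Big\}\, r^{(-1)}\Big(\frac{I_r(\theta m(\mathbb T))}{\theta m(\mathbb T)}\Big); \] (ii) for any $\theta\in(0,1)$ and any $\mu>0$, \[ \mathbb P\Big\{\sup_{t\in\mathbb T}|X(t)|\ge\mu\Big\}\le 2\exp\Big\{-\frac{\mu^2(1-\theta)^2}{2m^2(\mathbb T)}\Big\}\, r^{(-1)}\Big(\frac{I_r(\theta m(\mathbb T))}{\theta m(\mathbb T)}\Big). \]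
   Context: $N(u)$, $u>0$, denotes the metric massiveness of $(\mathbb T,\rho_X)$: the number of open balls in a minimal $u$-covering of $(\mathbb T,\rho_X)$. For the function $r$, $r^{(-1)}(t)=\sup\{u\ge0: r(u)\le t\}$ is its generalized inverse. *)

theory Defs
  imports "HOL-Probability.Probability"
begin

text \<open>A real random variable is centered Gaussian: either it vanishes almost surely
  (degenerate Gaussian with variance 0) or it has a normal distribution N(0, sigma^2), sigma > 0.\<close>
definition centered_gaussian_rv :: "'a measure \<Rightarrow> ('a \<Rightarrow> real) \<Rightarrow> bool" where
  "centered_gaussian_rv M Y \<longleftrightarrow> Y \<in> borel_measurable M \<and>
     ((AE \<omega> in M. Y \<omega> = 0) \<or> (\<exists>\<sigma>>0. distributed M lborel Y (normal_density 0 \<sigma>)))"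

definition centered_gaussian_process :: "'a measure \<Rightarrow> 't set \<Rightarrow> ('t \<Rightarrow> 'a \<Rightarrow> real) \<Rightarrow> bool" where
  "centered_gaussian_process M T X \<longleftrightarrow>
     (\<forall>F c. finite F \<longrightarrow> F \<subseteq> T \<longrightarrow> centered_gaussian_rv M (\<lambda>\<omega>. \<Sum>t\<in>F. c t * X t \<omega>))"

definition rho_X :: "'a measure \<Rightarrow> ('t \<Rightarrow> 'a \<Rightarrow> real) \<Rightarrow> 't \<Rightarrow> 't \<Rightarrow> real" where
  "rho_X M X t s = sqrt (\<integral>\<omega>. (X t \<omega> - X s \<omega>)\<^sup>2 \<partial>M)"

definition m_T :: "'a measure \<Rightarrow> 't set \<Rightarrow> ('t \<Rightarrow> 'a \<Rightarrow> real) \<Rightarrow> real" where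
  "m_T M T X = (SUP t\<in>T. sqrt (\<integral>\<omega>. (X t \<omega>)\<^sup>2 \<partial>M))"

definition separable_pm :: "'t set \<Rightarrow> ('t \<Rightarrow> 't \<Rightarrow> real) \<Rightarrow> bool" where
  "separable_pm T d \<longleftrightarrow> (\<exists>S\<subseteq>T. countable S \<and> (\<forall>t\<in>T. \<forall>\<epsilon>>0. \<exists>s\<in>S. d s t < \<epsilon>))"

definition separable_process ::
    "'a measure \<Rightarrow> 't set \<Rightarrow> ('t \<Rightarrow> 't \<Rightarrow> real) \<Rightarrow> ('t \<Rightarrow> 'a \<Rightarrow> real) \<Rightarrow> bool" where
  "separable_process M T d X \<longleftrightarrow>
     (\<exists>S\<subseteq>T. countable S \<and> (\<forall>t\<in>T. \<forall>\<epsilon>>0. \<exists>s\<in>S. d s t < \<epsilon>) \<and>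
       (\<exists>N\<in>null_sets M. \<forall>\<omega>\<in>space M - N. \<forall>t\<in>T. \<exists>s::nat \<Rightarrow> 't.
          (\<forall>n. s n \<in> S) \<and> (\<lambda>n. d (s n) t) \<longlonglongrightarrow> 0 \<and> (\<lambda>n. X (s n) \<omega>) \<longlonglongrightarrow> X t \<omega>))"

text \<open>Metric massiveness N(u): the least number of open balls of radius u (centres in T)
  covering T; \<infinity> if no finite covering exists.\<close>
definition covering_number :: "'t set \<Rightarrow> ('t \<Rightarrow> 't \<Rightarrow> real) \<Rightarrow> real \<Rightarrow> enat" where
  "covering_number T d u = (INF C\<in>{C. C \<subseteq> T \<and> finite C \<and> T \<subseteq> (\<Union>c\<in>C. {s\<in>T. d c s < u})}.
       enat (card C))"

definition I_r :: "(real \<Rightarrow> real) \<Rightarrow> 't set \<Rightarrow> ('t \<Rightarrow> 't \<Rightarrow> real) \<Rightarrow> real \<Rightarrow> ennreal" where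
  "I_r r T d x = (\<integral>\<^sup>+ v. indicator {0<..<x} v *
       (case covering_number T d v of enat n \<Rightarrow> ennreal (r (real n)) | \<infinity> \<Rightarrow> \<infinity>) \<partial>lborel)"

definition gen_inv :: "(real \<Rightarrow> real) \<Rightarrow> real \<Rightarrow> ennreal" where
  "gen_inv r t = (SUP u\<in>{u. 1 \<le> u \<and> r u \<le> t}. ennreal u)"

end

theory Submission
  imports Defs
begin


lemma normal_mgf:
  assumes "0 < (\<sigma>::real)"
  shows "(\<integral>\<^sup>+x. ennreal (normal_density 0 \<sigma> x * exp (c * x)) \<partial>lborel) = ennreal (exp (c\<^sup>2 * \<sigma>\<^sup>2 / 2))"
proof -
  have eq: "normal_density 0 \<sigma> x * exp (c * x) = exp (c\<^sup>2 * \<sigma>\<^sup>2 / 2) * normal_density (c * \<sigma>\<^sup>2) \<sigma> x" for x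
  proof -
    have "-(x - 0)\<^sup>2/ (2 * \<sigma>\<^sup>2) + c * x = c\<^sup>2 * \<sigma>\<^sup>2 / 2 + (-(x - c * \<sigma>\<^sup>2)\<^sup>2/ (2 * \<sigma>\<^sup>2))"
      using assms by (simp add: field_simps power2_eq_square)
    then show ?thesis unfolding normal_density_def
      by (simp add: exp_add[symmetric] mult_ac)
  qed
  have "(\<integral>\<^sup>+x. ennreal (normal_density 0 \<sigma> x * exp (c * x)) \<partial>lborel)
      = (\<integral>\<^sup>+x. ennreal (exp (c\<^sup>2 * \<sigma>\<^sup>2 / 2)) * ennreal (normal_density (c * \<sigma>\<^sup>2) \<sigma> x) \<partial>lborel)"
    by (simp add: eq ennreal_mult)
  also have "\<dots> = ennreal (exp (c\<^sup>2 * \<sigma>\<^sup>2 / 2)) * (\<integral>\<^sup>+x. ennreal (normal_density (c * \<sigma>\<^sup>2) \<sigma> x) \<partial>lborel)"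
    by (rule nn_integral_cmult) simp
  also have "(\<integral>\<^sup>+x. ennreal (normal_density (c * \<sigma>\<^sup>2) \<sigma> x) \<partial>lborel) = 1"
    using prob_space.emeasure_space_1[OF prob_space_normal_density[OF assms, of "c * \<sigma>\<^sup>2"]]
    by (simp add: emeasure_density)
  finally show ?thesis by simp
qed

lemma gauss_mgf:
  assumes P: "prob_space M" and G: "centered_gaussian_rv M Y"
  shows "(\<integral>\<^sup>+\<omega>. ennreal (exp (c * Y \<omega>)) \<partial>M) = ennreal (exp (c\<^sup>2 * (\<integral>\<omega>. (Y \<omega>)\<^sup>2 \<partial>M) / 2))"
proof -
  interpret prob_space M by fact
  have Ym: "Y \<in> borel_measurable M" using G unfolding centered_gaussian_rv_def by auto
  from G consider "AE \<omega> in M. Y \<omega> = 0" | \<sigma> where "\<sigma> > 0" "distributed M lborel Y (normal_density 0 \<sigma>)"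
    unfolding centered_gaussian_rv_def by auto
  then show ?thesis
  proof cases
    case 1
    have "(\<integral>\<^sup>+\<omega>. ennreal (exp (c * Y \<omega>)) \<partial>M) = (\<integral>\<^sup>+\<omega>. 1 \<partial>M)"
      by (rule nn_integral_cong_AE) (use 1 in auto)
    also have "\<dots> = 1" by (simp add: emeasure_space_1)
    finally have a: "(\<integral>\<^sup>+\<omega>. ennreal (exp (c * Y \<omega>)) \<partial>M) = 1" .
    have "(\<integral>\<omega>. (Y \<omega>)\<^sup>2 \<partial>M) = (\<integral>\<omega>. 0 \<partial>M)"
      by (rule integral_cong_AE) (use 1 Ym in auto)
    then show ?thesis using a by simp
  next
    case 2
    have "(\<integral>\<^sup>+\<omega>. ennreal (exp (c * Y \<omega>)) \<partial>M) = (\<integral>\<^sup>+x. ennreal (normal_density 0 \<sigma> x) * ennreal (exp (c * x)) \<partial>lborel)"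
      by (rule distributed_nn_integral[OF 2(2), symmetric]) simp
    also have "\<dots> = ennreal (exp (c\<^sup>2 * \<sigma>\<^sup>2 / 2))"
      using normal_mgf[OF 2(1), of c] by (simp add: ennreal_mult)
    finally have a: "(\<integral>\<^sup>+\<omega>. ennreal (exp (c * Y \<omega>)) \<partial>M) = ennreal (exp (c\<^sup>2 * \<sigma>\<^sup>2 / 2))" .
    have "variance Y = \<sigma>\<^sup>2" by (rule normal_distributed_variance[OF 2])
    moreover have "expectation Y = 0" by (rule normal_distributed_expectation[OF 2])
    ultimately have "(\<integral>\<omega>. (Y \<omega>)\<^sup>2 \<partial>M) = \<sigma>\<^sup>2" by simp
    then show ?thesis using a by simp
  qed
qed

lemma gauss_meas: "centered_gaussian_rv M Y \<Longrightarrow> Y \<in> borel_measurable M"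
  unfolding centered_gaussian_rv_def by auto

lemma gauss_mgf_le:
  assumes P: "prob_space M" and G: "centered_gaussian_rv M Y" and v: "(\<integral>\<omega>. (Y \<omega>)\<^sup>2 \<partial>M) \<le> v"
  shows "(\<integral>\<^sup>+\<omega>. ennreal (exp (c * Y \<omega>)) \<partial>M) \<le> ennreal (exp (c\<^sup>2 * v / 2))"
  unfolding gauss_mgf[OF P G]
  using v by (intro ennreal_leI) (auto intro!: mult_left_mono)

lemma max_gauss:
  assumes P: "prob_space M" and fin: "finite V"
    and G: "\<And>Y. Y \<in> V \<Longrightarrow> centered_gaussian_rv M Y \<and> (\<integral>\<omega>. (Y \<omega>)\<^sup>2 \<partial>M) \<le> v"
  shows "(\<integral>\<^sup>+\<omega>. ennreal (\<Sum>Y\<in>V. exp (\<mu> * Y \<omega>) + exp (- \<mu> * Y \<omega>)) \<partial>M)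
     \<le> ennreal (2 * real (card V) * exp (\<mu>\<^sup>2 * v / 2))"
proof -
  have "(\<integral>\<^sup>+\<omega>. ennreal (\<Sum>Y\<in>V. exp (\<mu> * Y \<omega>) + exp (- \<mu> * Y \<omega>)) \<partial>M)
      = (\<integral>\<^sup>+\<omega>. (\<Sum>Y\<in>V. ennreal (exp (\<mu> * Y \<omega>)) + ennreal (exp (- \<mu> * Y \<omega>))) \<partial>M)"
    by (intro nn_integral_cong) (simp add: sum_ennreal[symmetric] ennreal_plus del: sum_ennreal)
  also have "\<dots> = (\<Sum>Y\<in>V. (\<integral>\<^sup>+\<omega>. ennreal (exp (\<mu> * Y \<omega>)) + ennreal (exp (- \<mu> * Y \<omega>)) \<partial>M))"
    proof (rule nn_integral_sum)
    fix Y assume "Y \<in> V"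
    then have [measurable]: "Y \<in> borel_measurable M" using G gauss_meas by auto
    show "(\<lambda>\<omega>. ennreal (exp (\<mu> * Y \<omega>)) + ennreal (exp (- \<mu> * Y \<omega>))) \<in> borel_measurable M" by measurable
  qed
  also have "\<dots> \<le> (\<Sum>Y\<in>V. ennreal (2 * exp (\<mu>\<^sup>2 * v / 2)))"
  proof (rule sum_mono)
    fix Y assume Y: "Y \<in> V"
    have m: "Y \<in> borel_measurable M" using G Y gauss_meas by auto
    have "(\<integral>\<^sup>+\<omega>. ennreal (exp (\<mu> * Y \<omega>)) + ennreal (exp (- \<mu> * Y \<omega>)) \<partial>M)
        = (\<integral>\<^sup>+\<omega>. ennreal (exp (\<mu> * Y \<omega>)) \<partial>M) + (\<integral>\<^sup>+\<omega>. ennreal (exp (- \<mu> * Y \<omega>)) \<partial>M)"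
      by (rule nn_integral_add) (use m in auto)
    also have "\<dots> \<le> ennreal (exp (\<mu>\<^sup>2 * v / 2)) + ennreal (exp ((-\<mu>)\<^sup>2 * v / 2))"
      by (intro add_mono gauss_mgf_le[OF P]) (use G Y in auto)
    also have "\<dots> = ennreal (2 * exp (\<mu>\<^sup>2 * v / 2))"
      by (simp add: ennreal_plus[symmetric] del: ennreal_plus)
    finally show "(\<integral>\<^sup>+\<omega>. ennreal (exp (\<mu> * Y \<omega>)) + ennreal (exp (- \<mu> * Y \<omega>)) \<partial>M) \<le> ennreal (2 * exp (\<mu>\<^sup>2 * v / 2))" .
  qed
  also have "\<dots> = ennreal (2 * real (card V) * exp (\<mu>\<^sup>2 * v / 2))"
    by (simp add: ennreal_mult[symmetric] ennreal_of_nat_eq_real_of_nat mult_ac)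
  finally show ?thesis .
qed

lemma exp_abs_le: "0 \<le> (\<mu>::real) \<Longrightarrow> exp (\<mu> * \<bar>y\<bar>) \<le> exp (\<mu> * y) + exp (- \<mu> * y)"
  by (cases "y \<ge> 0") auto

lemma W_meas:
  fixes V :: "('a \<Rightarrow> real) set"
  assumes "finite V" "\<And>Y. Y \<in> V \<Longrightarrow> Y \<in> borel_measurable M"
  shows "(\<lambda>\<omega>. \<Sum>Y\<in>V. exp (\<mu> * Y \<omega>) + exp (- \<mu> * Y \<omega>)) \<in> borel_measurable M"
proof (rule borel_measurable_sum[where f="\<lambda>Y \<omega>. exp (\<mu> * Y \<omega>) + exp (- \<mu> * Y \<omega>::real)"])
  fix Y assume "Y \<in> V"
  then have [measurable]: "Y \<in> borel_measurable M" using assms by auto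
  show "(\<lambda>\<omega>. exp (\<mu> * Y \<omega>) + exp (- \<mu> * Y \<omega>)) \<in> borel_measurable M" by measurable
qed

lemma chain_bound:
  assumes P: "prob_space M" and fI: "finite I" and I0: "I \<noteq> {}"
    and a: "\<And>i. i \<in> I \<Longrightarrow> a i > 0" and sa: "(\<Sum>i\<in>I. a i) = 1"
    and V: "\<And>i. i \<in> I \<Longrightarrow> finite (V i) \<and> V i \<noteq> {}"
    and G: "\<And>i Y. i \<in> I \<Longrightarrow> Y \<in> V i \<Longrightarrow> centered_gaussian_rv M Y \<and> (\<integral>\<omega>. (Y \<omega>)\<^sup>2 \<partial>M) \<le> (a i * s)\<^sup>2"
    and lam: "lam \<ge> 0"
    and g: "\<And>\<omega>. \<omega> \<in> space M \<Longrightarrow> g \<omega> \<le> ennreal (exp (lam * (\<Sum>i\<in>I. Max ((\<lambda>Y. \<bar>Y \<omega>\<bar>) ` V i))))"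
  shows "(\<integral>\<^sup>+\<omega>. g \<omega> \<partial>M) \<le> ennreal (2 * exp (lam\<^sup>2 * s\<^sup>2 / 2) * exp (\<Sum>i\<in>I. a i * ln (card (V i))))"
proof -
  define E where "E = exp (lam\<^sup>2 * s\<^sup>2 / 2)"
  define c where "c i = 2 * real (card (V i)) * E" for i
  have cardpos: "i \<in> I \<Longrightarrow> real (card (V i)) > 0" for i using V[of i] by (simp add: card_gt_0_iff)
  have cpos: "i \<in> I \<Longrightarrow> c i > 0" for i using cardpos[of i] unfolding c_def E_def by simp
  define K where "K = exp (\<Sum>i\<in>I. a i * ln (c i))"
  have lnc: "i \<in> I \<Longrightarrow> ln (c i) = ln 2 + lam\<^sup>2 * s\<^sup>2 / 2 + ln (card (V i))" for i
    using cardpos[of i] unfolding c_def E_def by (simp add: ln_mult)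
  have "(\<Sum>i\<in>I. a i * ln (c i)) = (\<Sum>i\<in>I. a i * (ln 2 + lam\<^sup>2 * s\<^sup>2 / 2) + a i * ln (card (V i)))"
    by (rule sum.cong) (auto simp: lnc algebra_simps)
  also have "\<dots> = (ln 2 + lam\<^sup>2 * s\<^sup>2 / 2) + (\<Sum>i\<in>I. a i * ln (card (V i)))"
    by (simp add: sum.distrib sum_distrib_right[symmetric] sa)
  finally have K: "K = 2 * E * exp (\<Sum>i\<in>I. a i * ln (card (V i)))"
    unfolding K_def E_def by (simp add: exp_add)
  define W where "W i \<omega> = (\<Sum>Y\<in>V i. exp ((lam / a i) * Y \<omega>) + exp (- (lam / a i) * Y \<omega>))" for i \<omega>
  define H where "H \<omega> = (\<Sum>i\<in>I. (a i / c i) * W i \<omega>)" for \<omega>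
  have Wnn: "W i \<omega> \<ge> 0" for i \<omega> unfolding W_def by (intro sum_nonneg) auto
  have Wm: "i \<in> I \<Longrightarrow> W i \<in> borel_measurable M" for i
    unfolding W_def by (rule W_meas) (use V in auto, meson G gauss_meas)
  have pw: "exp (lam * (\<Sum>i\<in>I. Max ((\<lambda>Y. \<bar>Y \<omega>\<bar>) ` V i))) \<le> K * H \<omega>" for \<omega>
  proof -
    define Z where "Z i = Max ((\<lambda>Y. \<bar>Y \<omega>\<bar>) ` V i)" for i
    define u where "u i = (lam / a i) * Z i - ln (c i)" for i
    have "(\<Sum>i\<in>I. a i * u i) = lam * (\<Sum>i\<in>I. Z i) - (\<Sum>i\<in>I. a i * ln (c i))"
      unfolding u_def using a by (simp add: algebra_simps sum_subtractf sum_distrib_left) (rule sum.cong, auto, metis less_irrefl)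
    then have e1: "exp (lam * (\<Sum>i\<in>I. Z i)) = K * exp (\<Sum>i\<in>I. a i * u i)"
      unfolding K_def by (simp add: exp_diff)
    have "exp (\<Sum>i\<in>I. a i * u i) \<le> (\<Sum>i\<in>I. a i * exp (u i))"
      using convex_on_sum[OF fI I0 exp_convex sa, of u] a by (auto simp: less_imp_le)
    also have "\<dots> \<le> (\<Sum>i\<in>I. (a i / c i) * W i \<omega>)"
    proof (rule sum_mono)
      fix i assume i: "i \<in> I"
      have "exp (u i) = exp ((lam / a i) * Z i) / c i"
        unfolding u_def using cpos[OF i] by (simp add: exp_diff)
      moreover have "exp ((lam / a i) * Z i) \<le> W i \<omega>"
      proof -
        have "Z i \<in> (\<lambda>Y. \<bar>Y \<omega>\<bar>) ` V i"
          unfolding Z_def by (rule Max_in) (use V[OF i] in auto)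
        then obtain Y0 where Y0: "Y0 \<in> V i" "Z i = \<bar>Y0 \<omega>\<bar>" by auto
        have "exp ((lam / a i) * Z i) \<le> exp ((lam / a i) * Y0 \<omega>) + exp (- (lam / a i) * Y0 \<omega>)"
          unfolding Y0(2) by (rule exp_abs_le) (use lam a[OF i] in auto)
        also have "\<dots> \<le> W i \<omega>" unfolding W_def
          by (rule member_le_sum[where f="\<lambda>Y. exp ((lam / a i) * Y \<omega>) + exp (- (lam / a i) * Y \<omega>)"])
             (use Y0 V[OF i] in auto)
        finally show ?thesis .
      qed
      ultimately show "a i * exp (u i) \<le> (a i / c i) * W i \<omega>"
        using a[OF i] cpos[OF i] by (auto simp: divide_right_mono mult_left_mono)
    qed
    finally have "exp (\<Sum>i\<in>I. a i * u i) \<le> H \<omega>" unfolding H_def .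
    then show ?thesis unfolding Z_def[symmetric] e1 K_def by (intro mult_left_mono) auto
  qed
  have "(\<integral>\<^sup>+\<omega>. g \<omega> \<partial>M) \<le> (\<integral>\<^sup>+\<omega>. ennreal K * ennreal (H \<omega>) \<partial>M)"
  proof (rule nn_integral_mono)
    fix \<omega> assume "\<omega> \<in> space M"
    then have "g \<omega> \<le> ennreal (K * H \<omega>)" using g pw order_trans ennreal_leI by blast
    then show "g \<omega> \<le> ennreal K * ennreal (H \<omega>)" unfolding K_def by (simp add: ennreal_mult')
  qed
  also have "\<dots> = ennreal K * (\<integral>\<^sup>+\<omega>. ennreal (H \<omega>) \<partial>M)"
  proof (rule nn_integral_cmult)
    have "(\<lambda>\<omega>. \<Sum>i\<in>I. (a i / c i) * W i \<omega>) \<in> borel_measurable M"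
      using Wm by (intro borel_measurable_sum borel_measurable_times) auto
    then show "(\<lambda>\<omega>. ennreal (H \<omega>)) \<in> borel_measurable M" unfolding H_def by measurable
  qed
  also have "(\<integral>\<^sup>+\<omega>. ennreal (H \<omega>) \<partial>M) = (\<integral>\<^sup>+\<omega>. (\<Sum>i\<in>I. ennreal (a i / c i) * ennreal (W i \<omega>)) \<partial>M)"
    unfolding H_def
    by (intro nn_integral_cong)
       (use a cpos Wnn in \<open>auto simp: sum_ennreal[symmetric] less_imp_le intro!: sum.cong simp del: sum_ennreal, metis ennreal_mult'' times_divide_eq_left\<close>)
  also have "\<dots> = (\<Sum>i\<in>I. ennreal (a i / c i) * (\<integral>\<^sup>+\<omega>. ennreal (W i \<omega>) \<partial>M))"
    by (subst nn_integral_sum) (use Wm in \<open>auto intro!: sum.cong nn_integral_cmult\<close>)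
  also have "\<dots> \<le> (\<Sum>i\<in>I. ennreal (a i / c i) * ennreal (c i))"
  proof (intro sum_mono mult_left_mono)
    fix i assume i: "i \<in> I"
    have "(\<integral>\<^sup>+\<omega>. ennreal (W i \<omega>) \<partial>M) \<le> ennreal (2 * real (card (V i)) * exp ((lam / a i)\<^sup>2 * (a i * s)\<^sup>2 / 2))"
      unfolding W_def by (rule max_gauss[OF P]) (use V G i in auto)
    also have "(lam / a i)\<^sup>2 * (a i * s)\<^sup>2 = lam\<^sup>2 * s\<^sup>2" using a[OF i] by (simp add: field_simps power2_eq_square)
    finally show "(\<integral>\<^sup>+\<omega>. ennreal (W i \<omega>) \<partial>M) \<le> ennreal (c i)" unfolding c_def E_def by simp
  qed auto
  also have "\<dots> = ennreal (\<Sum>i\<in>I. a i)"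
  proof -
    have "(\<Sum>i\<in>I. ennreal (a i / c i) * ennreal (c i)) = (\<Sum>i\<in>I. ennreal (a i))"
    proof (rule sum.cong)
      fix i assume i: "i \<in> I"
      show "ennreal (a i / c i) * ennreal (c i) = ennreal (a i)"
        using a[OF i] cpos[OF i] by (simp add: ennreal_mult[symmetric])
    qed simp
    also have "\<dots> = ennreal (\<Sum>i\<in>I. a i)" using a by (simp add: less_imp_le)
    finally show ?thesis .
  qed
  finally have "(\<integral>\<^sup>+\<omega>. g \<omega> \<partial>M) \<le> ennreal K" using sa by (simp add: mult_left_mono)
  then show ?thesis unfolding K E_def .
qed



primrec down :: "(nat \<Rightarrow> 't \<Rightarrow> 't) \<Rightarrow> nat \<Rightarrow> nat \<Rightarrow> 't \<Rightarrow> 't" where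
  "down g j 0 t = g j t"
| "down g j (Suc k) t = g j (down g (Suc j) k t)"

locale setting =
  fixes M :: "'a measure" and T :: "'t set" and X :: "'t \<Rightarrow> 'a \<Rightarrow> real"
    and r :: "real \<Rightarrow> real"
  assumes P: "prob_space M"
    and Tne: "T \<noteq> {}"
    and GP: "centered_gaussian_process M T X"
    and bdd: "bdd_above ((\<lambda>t. sqrt (\<integral>\<omega>. (X t \<omega>)\<^sup>2 \<partial>M)) ` T)"
    and mpos: "m_T M T X > 0"
    and sepP: "separable_process M T (rho_X M X) X"
    and rnn: "\<forall>u\<ge>1. r u \<ge> 0"
    and rmono: "mono_on {1..} r"
    and rconv: "convex_on {0..} (\<lambda>y. r (exp y))"
    and Ifin: "I_r r T (rho_X M X) (m_T M T X) < \<infinity>"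
begin

abbreviation "d \<equiv> rho_X M X"
abbreviation "m \<equiv> m_T M T X"
abbreviation "Nc v \<equiv> covering_number T d v"

lemma gauss_single: "u \<in> T \<Longrightarrow> centered_gaussian_rv M (X u)"
proof -
  assume u: "u \<in> T"
  have "centered_gaussian_rv M (\<lambda>\<omega>. \<Sum>t\<in>{u}. (\<lambda>_. 1) t * X t \<omega>)"
    using GP[unfolded centered_gaussian_process_def, rule_format, of "{u}" "\<lambda>_. 1"] u by simp
  moreover have "(\<lambda>\<omega>. \<Sum>t\<in>{u}. (\<lambda>_. 1::real) t * X t \<omega>) = X u" by auto
  ultimately show ?thesis by simp
qed

lemma gauss_diff: "u \<in> T \<Longrightarrow> w \<in> T \<Longrightarrow> centered_gaussian_rv M (\<lambda>\<omega>. X u \<omega> - X w \<omega>)"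
proof -
  assume u: "u \<in> T" and w: "w \<in> T"
  define c where "c t = (if u = w then 0 else if t = u then 1 else (-1::real))" for t
  have "centered_gaussian_rv M (\<lambda>\<omega>. \<Sum>t\<in>{u,w}. c t * X t \<omega>)"
    using GP[unfolded centered_gaussian_process_def, rule_format, of "{u,w}" c] u w by simp
  moreover have "(\<lambda>\<omega>. \<Sum>t\<in>{u,w}. c t * X t \<omega>) = (\<lambda>\<omega>. X u \<omega> - X w \<omega>)"
    by (cases "u = w") (auto simp: c_def)
  ultimately show ?thesis by simp
qed

lemma var_single: "u \<in> T \<Longrightarrow> (\<integral>\<omega>. (X u \<omega>)\<^sup>2 \<partial>M) \<le> m\<^sup>2"
proof -
  assume u: "u \<in> T"
  have nn: "0 \<le> (\<integral>\<omega>. (X u \<omega>)\<^sup>2 \<partial>M)" by simp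
  have "sqrt (\<integral>\<omega>. (X u \<omega>)\<^sup>2 \<partial>M) \<le> m"
    unfolding m_T_def by (rule cSUP_upper[OF u bdd])
  then have "(sqrt (\<integral>\<omega>. (X u \<omega>)\<^sup>2 \<partial>M))\<^sup>2 \<le> m\<^sup>2"
    by (intro power_mono) auto
  then show ?thesis using nn by simp
qed

lemma var_diff: "d u w < e \<Longrightarrow> (\<integral>\<omega>. (X u \<omega> - X w \<omega>)\<^sup>2 \<partial>M) \<le> e\<^sup>2"
proof -
  assume "d u w < e"
  have nn: "0 \<le> (\<integral>\<omega>. (X u \<omega> - X w \<omega>)\<^sup>2 \<partial>M)" by simp
  have "(d u w)\<^sup>2 \<le> e\<^sup>2" using \<open>d u w < e\<close>
    by (intro power_mono) (auto simp: rho_X_def)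
  then show ?thesis using nn by (simp add: rho_X_def)
qed

lemma Nc_mono: "v \<le> w \<Longrightarrow> Nc w \<le> Nc v"
  unfolding covering_number_def
proof (rule INF_superset_mono)
  assume vw: "v \<le> w"
  show "{C. C \<subseteq> T \<and> finite C \<and> T \<subseteq> (\<Union>c\<in>C. {s\<in>T. d c s < v})}
     \<subseteq> {C. C \<subseteq> T \<and> finite C \<and> T \<subseteq> (\<Union>c\<in>C. {s\<in>T. d c s < w})}"
  proof (safe)
    fix C x assume "T \<subseteq> (\<Union>c\<in>C. {s\<in>T. d c s < v})" "x \<in> T"
    then obtain c where "c \<in> C" "d c x < v" by blast
    then show "x \<in> (\<Union>c\<in>C. {s\<in>T. d c s < w})" using vw \<open>x \<in> T\<close> by force
  qed
qed simp

lemma Nc_ge1: "Nc v \<ge> 1"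
  unfolding covering_number_def
proof (rule INF_greatest)
  fix C assume C: "C \<in> {C. C \<subseteq> T \<and> finite C \<and> T \<subseteq> (\<Union>c\<in>C. {s\<in>T. d c s < v})}"
  then have "C \<noteq> {}" using Tne by auto
  then show "1 \<le> enat (card C)" using C by (simp add: one_enat_def card_gt_0_iff Suc_le_eq)
qed

lemma Nc_attained:
  assumes "Nc v = enat n"
  shows "\<exists>C. C \<subseteq> T \<and> finite C \<and> T \<subseteq> (\<Union>c\<in>C. {s\<in>T. d c s < v}) \<and> card C = n"
proof -
  let ?S = "{C. C \<subseteq> T \<and> finite C \<and> T \<subseteq> (\<Union>c\<in>C. {s\<in>T. d c s < v})}"
  have ne: "(\<lambda>C. enat (card C)) ` ?S \<noteq> {}"
  proof
    assume "(\<lambda>C. enat (card C)) ` ?S = {}"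
    then have "Nc v = \<infinity>" unfolding covering_number_def by (simp only: Inf_empty top_enat_def)
    then show False using assms by simp
  qed
  then obtain k where "k \<in> (\<lambda>C. enat (card C)) ` ?S" by blast
  then have "Inf ((\<lambda>C. enat (card C)) ` ?S) \<in> (\<lambda>C. enat (card C)) ` ?S"
    by (rule wellorder_InfI)
  then show ?thesis using assms unfolding covering_number_def by auto
qed


definition "R v = (case Nc v of enat n \<Rightarrow> ennreal (r (real n)) | \<infinity> \<Rightarrow> \<infinity>)"

lemma Ir_eq: "I_r r T d x = (\<integral>\<^sup>+ v. indicator {0<..<x} v * R v \<partial>lborel)"
  unfolding I_r_def R_def ..

lemma Ir_mono: "x \<le> y \<Longrightarrow> I_r r T d x \<le> I_r r T d y"
  unfolding Ir_eq by (intro nn_integral_mono mult_right_mono) (auto split: split_indicator)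

lemma Nc_fin: assumes "0 < v" "v < m" shows "Nc v \<noteq> \<infinity>"
proof
  assume inf: "Nc v = \<infinity>"
  have "(\<integral>\<^sup>+ w. \<infinity> * indicator {0<..<v} w \<partial>lborel) \<le> I_r r T d m"
    unfolding Ir_eq
  proof (rule nn_integral_mono)
    fix w :: real
    show "\<infinity> * indicator {0<..<v} w \<le> indicator {0<..<m} w * R w"
    proof (cases "w \<in> {0<..<v}")
      case True
      then have "Nc w = \<infinity>" using Nc_mono[of w v] inf by (simp add: top_enat_def[symmetric] top.extremum_unique)
      then show ?thesis using True assms by (simp add: R_def)
    qed simp
  qed
  also have "(\<integral>\<^sup>+ w. \<infinity> * indicator {0<..<v} w \<partial>lborel) = \<infinity>"
    using assms by (subst nn_integral_cmult_indicator) (auto simp: ennreal_top_mult)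
  finally show False using Ifin by simp
qed

lemma R_ge1: "ennreal (r 1) \<le> R v"
proof (cases "Nc v")
  case (enat k)
  then have "k \<ge> 1" using Nc_ge1[of v] by (simp add: one_enat_def)
  then have "r 1 \<le> r (real k)" by (intro mono_onD[OF rmono]) auto
  then show ?thesis using enat by (simp add: R_def ennreal_leI)
qed (simp add: R_def)

lemma R_ge: assumes "Nc e = enat n" "v \<le> e" shows "ennreal (r (real n)) \<le> R v"
proof (cases "Nc v")
  case (enat k)
  have "enat n \<le> enat k" using Nc_mono[OF assms(2)] assms(1) enat by simp
  moreover have "n \<ge> 1" using Nc_ge1[of e] assms(1) by (simp add: one_enat_def)
  ultimately have "r n \<le> r (real k)" by (intro mono_onD[OF rmono]) auto
  then show ?thesis using enat by (simp add: R_def ennreal_leI)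
qed (simp add: R_def)

lemma gen_inv_ge: "1 \<le> u \<Longrightarrow> r u \<le> t \<Longrightarrow> ennreal u \<le> gen_inv r t"
  unfolding gen_inv_def by (rule SUP_upper) auto

lemma geom_sum: "(\<Sum>i\<le>K. (1 - \<theta>) * \<theta> ^ i) = 1 - (\<theta>::real) ^ Suc K"
  by (induction K) (auto simp: algebra_simps)

end

locale setting_theta = setting +
  fixes \<theta> :: real
  assumes th0: "0 < \<theta>" and th1: "\<theta> < 1"
begin

definition "e j = \<theta> ^ j * m"
definition "n j = the_enat (Nc (e j))"

lemma e_pos: "e j > 0" unfolding e_def using th0 mpos by simp

lemma e_anti: "j \<le> k \<Longrightarrow> e k \<le> e j"
  unfolding e_def using th0 th1 mpos by (intro mult_right_mono power_decreasing) auto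

lemma e_strict: "j < k \<Longrightarrow> e k < e j"
  unfolding e_def using th0 th1 mpos by (intro mult_strict_right_mono power_strict_decreasing) auto

lemma e_lt_m: "j \<ge> 1 \<Longrightarrow> e j < m"
  using e_strict[of 0 j] by (simp add: e_def)

lemma n_eq: assumes "j \<ge> 1" shows "Nc (e j) = enat (n j)"
proof -
  have "Nc (e j) \<noteq> \<infinity>" using Nc_fin[OF e_pos e_lt_m[OF assms]] .
  then show ?thesis unfolding n_def by (cases "Nc (e j)") auto
qed

lemma n_ge1: "j \<ge> 1 \<Longrightarrow> n j \<ge> 1"
  using Nc_ge1[of "e j"] n_eq[of j] by (simp add: one_enat_def)


lemma rn_nn: "j \<ge> 1 \<Longrightarrow> r (real (n j)) \<ge> 0"
  using rnn n_ge1[of j] by auto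

lemma h_pointwise:
  "(\<Sum>i\<le>K. ennreal (r (n (Suc i))) * indicator {e (Suc (Suc i))..<e (Suc i)} v)
     + ennreal (r 1) * indicator {0<..<e (Suc (Suc K))} v
   \<le> indicator {0<..<e 1} v * R v"
proof (cases "\<exists>i\<le>K. v \<in> {e (Suc (Suc i))..<e (Suc i)}")
  case True
  then obtain i where i: "i \<le> K" "v \<in> {e (Suc (Suc i))..<e (Suc i)}" by blast
  have others: "indicator {e (Suc (Suc i'))..<e (Suc i')} v = (0::ennreal)" if "i' \<noteq> i" for i'
  proof (cases "i' < i")
    case True
    then have "e (Suc i) \<le> e (Suc (Suc i'))" by (intro e_anti) auto
    then show ?thesis using i by auto
  next
    case False
    then have "e (Suc i') \<le> e (Suc (Suc i))" using that by (intro e_anti) auto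
    then show ?thesis using i by auto
  qed
  have "(\<Sum>i'\<le>K. ennreal (r (n (Suc i'))) * indicator {e (Suc (Suc i'))..<e (Suc i')} v)
      = ennreal (r (n (Suc i))) * indicator {e (Suc (Suc i))..<e (Suc i)} v
        + (\<Sum>i'\<in>{..K} - {i}. ennreal (r (n (Suc i'))) * indicator {e (Suc (Suc i'))..<e (Suc i')} v)"
    using i by (subst sum.remove[of _ i]) auto
  also have "(\<Sum>i'\<in>{..K} - {i}. ennreal (r (n (Suc i'))) * indicator {e (Suc (Suc i'))..<e (Suc i')} v) = 0"
    by (rule sum.neutral) (auto simp: others)
  finally have s: "(\<Sum>i'\<le>K. ennreal (r (n (Suc i'))) * indicator {e (Suc (Suc i'))..<e (Suc i')} v)
      = ennreal (r (n (Suc i)))" using i by simp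
  have "e (Suc (Suc K)) \<le> e (Suc (Suc i))" using i by (intro e_anti) auto
  then have l: "indicator {0<..<e (Suc (Suc K))} v = (0::ennreal)" using i by auto
  have "0 < v" using i e_pos[of "Suc (Suc i)"] by auto
  moreover have "v < e 1" using i e_anti[of 1 "Suc i"] by auto
  ultimately have ind: "indicator {0<..<e 1} v = (1::ennreal)" by auto
  have "ennreal (r (n (Suc i))) \<le> R v"
    by (rule R_ge[OF n_eq]) (use i in auto)
  then show ?thesis using s l ind by simp
next
  case False
  then have s: "(\<Sum>i'\<le>K. ennreal (r (n (Suc i'))) * indicator {e (Suc (Suc i'))..<e (Suc i')} v) = 0"
    by (intro sum.neutral) auto
  show ?thesis
  proof (cases "v \<in> {0<..<e (Suc (Suc K))}")
    case True
    then have "v < e 1" using e_anti[of 1 "Suc (Suc K)"] by auto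
    then show ?thesis using True s R_ge1[of v] by auto
  qed (simp add: s)
qed

lemma Ir_lower:
  "ennreal ((\<Sum>i\<le>K. (e (Suc i) - e (Suc (Suc i))) * r (n (Suc i))) + e (Suc (Suc K)) * r 1)
     \<le> I_r r T d (e 1)"
proof -
  have "ennreal ((\<Sum>i\<le>K. (e (Suc i) - e (Suc (Suc i))) * r (n (Suc i))) + e (Suc (Suc K)) * r 1)
      = (\<Sum>i\<le>K. ennreal (r (n (Suc i))) * emeasure lborel {e (Suc (Suc i))..<e (Suc i)})
        + ennreal (r 1) * emeasure lborel {0<..<e (Suc (Suc K))}"
  proof -
    have a: "e (Suc (Suc i)) \<le> e (Suc i)" for i by (rule e_anti) auto
    have b: "0 \<le> (e (Suc i) - e (Suc (Suc i))) * r (n (Suc i))" for i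
      using a[of i] rn_nn[of "Suc i"] by auto
    have c: "0 \<le> e (Suc (Suc K)) * r 1" using e_pos[of "Suc (Suc K)"] rnn by auto
    have "ennreal ((\<Sum>i\<le>K. (e (Suc i) - e (Suc (Suc i))) * r (n (Suc i))) + e (Suc (Suc K)) * r 1)
        = (\<Sum>i\<le>K. ennreal ((e (Suc i) - e (Suc (Suc i))) * r (n (Suc i)))) + ennreal (e (Suc (Suc K)) * r 1)"
      using b c by (subst ennreal_plus) (auto intro: sum_nonneg)
    also have "\<dots> = (\<Sum>i\<le>K. ennreal (r (n (Suc i))) * emeasure lborel {e (Suc (Suc i))..<e (Suc i)})
        + ennreal (r 1) * emeasure lborel {0<..<e (Suc (Suc K))}"
      using a e_pos[of "Suc (Suc K)"] rn_nn rnn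
      by (intro arg_cong2[where f="(+)"] sum.cong)
         (auto simp: ennreal_mult'' mult.commute)
    finally show ?thesis .
  qed
  also have "\<dots> = (\<integral>\<^sup>+v. (\<Sum>i\<le>K. ennreal (r (n (Suc i))) * indicator {e (Suc (Suc i))..<e (Suc i)} v)
     + ennreal (r 1) * indicator {0<..<e (Suc (Suc K))} v \<partial>lborel)"
  proof -
    have m1: "(\<lambda>v. \<Sum>i\<le>K. ennreal (r (n (Suc i))) * indicator {e (Suc (Suc i))..<e (Suc i)} v) \<in> borel_measurable lborel"
      by measurable
    have m2: "(\<lambda>v. ennreal (r 1) * indicator {0<..<e (Suc (Suc K))} v) \<in> borel_measurable lborel"
      by measurable
    show ?thesis
      apply (subst nn_integral_add[OF m1 m2])
      apply (subst nn_integral_sum)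
       apply measurable
      apply (subst nn_integral_cmult_indicator)
       apply measurable
      apply (rule arg_cong2[where f="(+)"])
       apply (rule refl)
      apply (subst nn_integral_cmult_indicator)
       apply measurable
      done
  qed
  also have "\<dots> \<le> I_r r T d (e 1)"
    unfolding Ir_eq by (rule nn_integral_mono) (rule h_pointwise)
  finally show ?thesis .
qed


lemma jensen_part:
  "r (exp (\<Sum>i\<le>K. (1 - \<theta>) * \<theta> ^ i * ln (n (Suc i))))
     \<le> (\<Sum>i\<le>K. (1 - \<theta>) * \<theta> ^ i * r (n (Suc i))) + \<theta> ^ Suc K * r 1"
proof -
  define a where "a i = (if i \<le> K then (1 - \<theta>) * \<theta> ^ i else \<theta> ^ Suc K)" for i
  define y where "y i = (if i \<le> K then ln (real (n (Suc i))) else 0)" for i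
  have sa: "(\<Sum>i\<le>Suc K. a i) = 1"
    using geom_sum[where K=K and \<theta>=\<theta>] by (simp add: a_def)
  have "r (exp (\<Sum>i\<le>Suc K. a i *\<^sub>R y i)) \<le> (\<Sum>i\<le>Suc K. a i * r (exp (y i)))"
  proof (rule convex_on_sum[OF _ _ rconv sa])
    show "\<And>i. i \<in> {..Suc K} \<Longrightarrow> 0 \<le> a i" using th0 th1 by (auto simp: a_def)
    show "\<And>i. i \<in> {..Suc K} \<Longrightarrow> y i \<in> {0..}" using n_ge1 by (auto simp: y_def)
  qed auto
  moreover have "(\<Sum>i\<le>Suc K. a i *\<^sub>R y i) = (\<Sum>i\<le>K. (1 - \<theta>) * \<theta> ^ i * ln (n (Suc i)))"
    by (simp add: a_def y_def)
  moreover have "(\<Sum>i\<le>Suc K. a i * r (exp (y i))) = (\<Sum>i\<le>K. (1 - \<theta>) * \<theta> ^ i * r (n (Suc i))) + \<theta> ^ Suc K * r 1"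
  proof -
    have "(\<Sum>i\<le>K. a i * r (exp (y i))) = (\<Sum>i\<le>K. (1 - \<theta>) * \<theta> ^ i * r (n (Suc i)))"
    proof (rule sum.cong)
      fix i assume "i \<in> {..K}"
      then show "a i * r (exp (y i)) = (1 - \<theta>) * \<theta> ^ i * r (n (Suc i))"
        using n_ge1[of "Suc i"] by (simp add: a_def y_def)
    qed simp
    then show ?thesis by (simp add: a_def y_def)
  qed
  ultimately show ?thesis by simp
qed

lemma ent:
  "ennreal (exp (\<Sum>i\<le>K. (1 - \<theta>) * \<theta> ^ i * ln (n (Suc i))))
     \<le> gen_inv r (enn2real (I_r r T d (\<theta> * m)) / (\<theta> * m))"
proof (rule gen_inv_ge)
  let ?y = "\<Sum>i\<le>K. (1 - \<theta>) * \<theta> ^ i * ln (n (Suc i))"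
  have "0 \<le> ?y" using th0 th1 n_ge1 by (intro sum_nonneg) auto
  then show "1 \<le> exp ?y" by simp
  define Q where "Q = (\<Sum>i\<le>K. (1 - \<theta>) * \<theta> ^ i * r (n (Suc i))) + \<theta> ^ Suc K * r 1"
  have tm: "\<theta> * m > 0" using th0 mpos by simp
  have "(\<Sum>i\<le>K. (e (Suc i) - e (Suc (Suc i))) * r (n (Suc i))) + e (Suc (Suc K)) * r 1 = (\<theta> * m) * Q"
    unfolding Q_def e_def by (simp add: sum_distrib_left algebra_simps)
  with Ir_lower[of K] have "ennreal ((\<theta> * m) * Q) \<le> I_r r T d (\<theta> * m)"
    by (simp add: e_def)
  moreover have "I_r r T d (\<theta> * m) < \<infinity>"
  proof -
    have "\<theta> * m \<le> m" using th1 mpos by simp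
    then have "I_r r T d (\<theta> * m) \<le> I_r r T d m" by (rule Ir_mono)
    then show ?thesis using Ifin by (rule le_less_trans)
  qed
  moreover have "0 \<le> Q" unfolding Q_def using th0 th1 rn_nn rnn
    by (intro add_nonneg_nonneg sum_nonneg mult_nonneg_nonneg) auto
  ultimately have "enn2real (ennreal ((\<theta> * m) * Q)) \<le> enn2real (I_r r T d (\<theta> * m))"
    by (intro enn2real_mono) auto
  then have "(\<theta> * m) * Q \<le> enn2real (I_r r T d (\<theta> * m))"
    using \<open>0 \<le> Q\<close> tm by simp
  then have "Q \<le> enn2real (I_r r T d (\<theta> * m)) / (\<theta> * m)"
    using tm by (simp add: field_simps)
  then show "r (exp ?y) \<le> enn2real (I_r r T d (\<theta> * m)) / (\<theta> * m)"
    using jensen_part[of K] unfolding Q_def by linarith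
qed


definition "A j = (SOME C. C \<subseteq> T \<and> finite C \<and> T \<subseteq> (\<Union>c\<in>C. {s\<in>T. d c s < e j}) \<and> card C = n j)"

lemma A_props:
  assumes "j \<ge> 1"
  shows "A j \<subseteq> T" "finite (A j)" "T \<subseteq> (\<Union>c\<in>A j. {s\<in>T. d c s < e j})" "card (A j) = n j"
proof -
  have "\<exists>C. C \<subseteq> T \<and> finite C \<and> T \<subseteq> (\<Union>c\<in>C. {s\<in>T. d c s < e j}) \<and> card C = n j"
    by (rule Nc_attained[OF n_eq[OF assms]])
  then have "A j \<subseteq> T \<and> finite (A j) \<and> T \<subseteq> (\<Union>c\<in>A j. {s\<in>T. d c s < e j}) \<and> card (A j) = n j"
    unfolding A_def by (rule someI_ex)
  then show "A j \<subseteq> T" "finite (A j)" "T \<subseteq> (\<Union>c\<in>A j. {s\<in>T. d c s < e j})" "card (A j) = n j"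
    by auto
qed

definition "f j u = (SOME c. c \<in> A j \<and> d c u < e j)"

lemma f_props:
  assumes "j \<ge> 1" "u \<in> T"
  shows "f j u \<in> A j" "d (f j u) u < e j"
proof -
  have "\<exists>c. c \<in> A j \<and> d c u < e j" using A_props(3)[OF assms(1)] assms(2) by blast
  then have "f j u \<in> A j \<and> d (f j u) u < e j" unfolding f_def by (rule someI_ex)
  then show "f j u \<in> A j" "d (f j u) u < e j" by auto
qed

lemma down_in: "j \<ge> 1 \<Longrightarrow> t \<in> T \<Longrightarrow> down f j k t \<in> A j"
proof (induction k arbitrary: j)
  case 0
  then show ?case using f_props by simp
next
  case (Suc k)
  have "down f (Suc j) k t \<in> A (Suc j)" using Suc by simp
  then have "down f (Suc j) k t \<in> T" using A_props(1)[of "Suc j"] by auto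
  then show ?case using f_props Suc.prems by simp
qed

definition "V F K i = (if i = 0 then X ` A 1
   else if i \<le> K then (\<lambda>u \<omega>. X (f i u) \<omega> - X u \<omega>) ` A (Suc i)
   else (\<lambda>s \<omega>. X (f (Suc K) s) \<omega> - X s \<omega>) ` F)"

definition "a K i = (if i \<le> K then (1 - \<theta>) * \<theta> ^ i else \<theta> ^ Suc K)"

lemma chain_ineq:
  assumes F: "F \<subseteq> T" "finite F" and s: "s \<in> F"
  shows "\<bar>X s \<omega>\<bar> \<le> (\<Sum>i\<le>Suc K. Max ((\<lambda>Y. \<bar>Y \<omega>\<bar>) ` V F K i))"
proof -
  define pt where "pt j = down f j (Suc K - j) s" for j
  have sT: "s \<in> T" using F s by auto
  have ptA: "j \<ge> 1 \<Longrightarrow> pt j \<in> A j" for j unfolding pt_def using down_in sT by simp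
  have pt_step: "1 \<le> j \<Longrightarrow> j \<le> K \<Longrightarrow> pt j = f j (pt (Suc j))" for j
  proof -
    assume j: "1 \<le> j" "j \<le> K"
    then have "Suc K - j = Suc (K - j)" "Suc K - Suc j = K - j" by auto
    then show ?thesis unfolding pt_def by simp
  qed
  have pt_last: "pt (Suc K) = f (Suc K) s" unfolding pt_def by simp
  define Z where "Z i = Max ((\<lambda>Y. \<bar>Y \<omega>\<bar>) ` V F K i)" for i
  have finV: "finite (V F K i)" for i
    using F A_props(2) by (auto simp: V_def)
  have Zge: "Y \<in> V F K i \<Longrightarrow> \<bar>Y \<omega>\<bar> \<le> Z i" for Y i
    unfolding Z_def by (rule Max_ge) (use finV in auto)
  have z0: "\<bar>X (pt 1) \<omega>\<bar> \<le> Z 0"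
    by (rule Zge[of "X (pt 1)"]) (use ptA[of 1] in \<open>auto simp: V_def\<close>)
  have zi: "\<bar>X (pt i) \<omega> - X (pt (Suc i)) \<omega>\<bar> \<le> Z i" if i: "i \<in> {1..K}" for i
  proof -
    have "(\<lambda>\<omega>. X (f i (pt (Suc i))) \<omega> - X (pt (Suc i)) \<omega>) \<in> V F K i"
      using i ptA[of "Suc i"] by (auto simp: V_def)
    from Zge[OF this] show ?thesis using pt_step[of i] i by simp
  qed
  have zl: "\<bar>X (pt (Suc K)) \<omega> - X s \<omega>\<bar> \<le> Z (Suc K)"
  proof -
    have "(\<lambda>\<omega>. X (f (Suc K) s) \<omega> - X s \<omega>) \<in> V F K (Suc K)"
      using s by (auto simp: V_def)
    from Zge[OF this] show ?thesis using pt_last by simp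
  qed
  have tel: "(\<Sum>i=1..K. (- X (pt (Suc i)) \<omega>) - (- X (pt i) \<omega>)) = - X (pt (Suc K)) \<omega> - (- X (pt 1) \<omega>)"
    by (rule sum_Suc_diff) simp
  have eq: "X s \<omega> = X (pt 1) \<omega> - (\<Sum>i=1..K. X (pt i) \<omega> - X (pt (Suc i)) \<omega>) - (X (pt (Suc K)) \<omega> - X s \<omega>)"
    using tel by simp
  have "\<bar>X s \<omega>\<bar> \<le> \<bar>X (pt 1) \<omega>\<bar> + \<bar>\<Sum>i=1..K. X (pt i) \<omega> - X (pt (Suc i)) \<omega>\<bar> + \<bar>X (pt (Suc K)) \<omega> - X s \<omega>\<bar>"
    by (subst eq) linarith
  also have "\<dots> \<le> Z 0 + (\<Sum>i=1..K. Z i) + Z (Suc K)"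
  proof -
    have "\<bar>\<Sum>i=1..K. X (pt i) \<omega> - X (pt (Suc i)) \<omega>\<bar> \<le> (\<Sum>i=1..K. \<bar>X (pt i) \<omega> - X (pt (Suc i)) \<omega>\<bar>)"
      by (rule sum_abs)
    also have "\<dots> \<le> (\<Sum>i=1..K. Z i)" by (rule sum_mono) (rule zi)
    finally show ?thesis using z0 zl by linarith
  qed
  also have "\<dots> = (\<Sum>i\<le>Suc K. Z i)"
  proof -
    have "{..K} = insert 0 {1..K}" by auto
    then have "(\<Sum>i\<le>K. Z i) = Z 0 + (\<Sum>i=1..K. Z i)" by simp
    then show ?thesis by simp
  qed
  finally show ?thesis unfolding Z_def .
qed


lemma A_ne: "j \<ge> 1 \<Longrightarrow> A j \<noteq> {}"
  using A_props(4)[of j] n_ge1[of j] by auto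

lemma V_fin_ne: "F \<subseteq> T \<Longrightarrow> finite F \<Longrightarrow> F \<noteq> {} \<Longrightarrow> finite (V F K i) \<and> V F K i \<noteq> {}"
  using A_props(2) A_ne by (auto simp: V_def)

lemma V_card: "F \<subseteq> T \<Longrightarrow> finite F \<Longrightarrow> F \<noteq> {} \<Longrightarrow> i \<le> K \<Longrightarrow> card (V F K i) \<le> n (Suc i)"
  using A_props(4)[of "Suc i"] A_props(2)[of "Suc i"] A_props(4)[of 1] A_props(2)[of 1]
  by (auto simp: V_def intro: card_image_le order_trans)

lemma V_card_last: "F \<subseteq> T \<Longrightarrow> finite F \<Longrightarrow> F \<noteq> {} \<Longrightarrow> card (V F K (Suc K)) \<le> card F"
  by (auto simp: V_def intro: card_image_le)

lemma V_gauss: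
  assumes F: "F \<subseteq> T" and i: "i \<le> Suc K" and Y: "Y \<in> V F K i"
  shows "centered_gaussian_rv M Y \<and> (\<integral>\<omega>. (Y \<omega>)\<^sup>2 \<partial>M) \<le> (a K i * (m / (1 - \<theta>)))\<^sup>2"
proof -
  have th: "0 < 1 - \<theta>" using th1 by simp
  consider "i = 0" | "1 \<le> i" "i \<le> K" | "i = Suc K" using i by linarith
  then show ?thesis
  proof cases
    case 1
    then obtain u where u: "u \<in> A 1" "Y = X u" using Y by (auto simp: V_def)
    have uT: "u \<in> T" using u A_props(1)[of 1] by auto
    have "a K i * (m / (1 - \<theta>)) = m" using 1 th by (simp add: a_def)
    then show ?thesis using gauss_single[OF uT] var_single[OF uT] u by simp
  next
    case 2
    then obtain u where u: "u \<in> A (Suc i)" "Y = (\<lambda>\<omega>. X (f i u) \<omega> - X u \<omega>)" using Y by (auto simp: V_def)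
    have uT: "u \<in> T" using u A_props(1)[of "Suc i"] by auto
    have fT: "f i u \<in> T" using f_props(1)[OF 2(1) uT] A_props(1)[OF 2(1)] by auto
    have "a K i * (m / (1 - \<theta>)) = e i" using 2 th by (simp add: a_def e_def)
    then show ?thesis using gauss_diff[OF fT uT] var_diff[OF f_props(2)[OF 2(1) uT]] u by simp
  next
    case 3
    then obtain u where u: "u \<in> F" "Y = (\<lambda>\<omega>. X (f (Suc K) u) \<omega> - X u \<omega>)" using Y by (auto simp: V_def)
    have uT: "u \<in> T" using u F by auto
    have fT: "f (Suc K) u \<in> T" using f_props(1)[OF _ uT, of "Suc K"] A_props(1)[of "Suc K"] by auto
    have le: "e (Suc K) \<le> a K i * (m / (1 - \<theta>))"
    proof -
      have "m \<le> m / (1 - \<theta>)" using th th0 mpos by (simp add: field_simps)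
      then have "\<theta> ^ Suc K * m \<le> \<theta> ^ Suc K * (m / (1 - \<theta>))"
        by (rule mult_left_mono) (use th0 in simp)
      then show ?thesis using 3 by (simp add: a_def e_def)
    qed
    have "(\<integral>\<omega>. (Y \<omega>)\<^sup>2 \<partial>M) \<le> (e (Suc K))\<^sup>2"
      using var_diff[OF f_props(2)[OF _ uT, of "Suc K"]] u by simp
    also have "\<dots> \<le> (a K i * (m / (1 - \<theta>)))\<^sup>2"
      using le e_pos[of "Suc K"] by (intro power_mono) auto
    finally show ?thesis using gauss_diff[OF fT uT] u by simp
  qed
qed

lemma core:
  assumes F: "F \<subseteq> T" "finite F" "F \<noteq> {}" and lam: "lam \<ge> 0"
  shows "(\<integral>\<^sup>+\<omega>. (SUP s\<in>F. ennreal (exp (lam * \<bar>X s \<omega>\<bar>))) \<partial>M)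
     \<le> ennreal (2 * exp (lam\<^sup>2 * (m / (1 - \<theta>))\<^sup>2 / 2)
          * exp ((\<Sum>i\<le>K. (1 - \<theta>) * \<theta> ^ i * ln (n (Suc i))) + \<theta> ^ Suc K * ln (card F)))"
proof -
  have sa: "(\<Sum>i\<le>Suc K. a K i) = 1"
    using geom_sum[where K=K and \<theta>=\<theta>] by (simp add: a_def)
  have cb: "(\<integral>\<^sup>+\<omega>. (SUP s\<in>F. ennreal (exp (lam * \<bar>X s \<omega>\<bar>))) \<partial>M)
     \<le> ennreal (2 * exp (lam\<^sup>2 * (m / (1 - \<theta>))\<^sup>2 / 2) * exp (\<Sum>i\<le>Suc K. a K i * ln (card (V F K i))))"
  proof (rule chain_bound[OF P _ _ _ sa])
    show "\<And>i. i \<in> {..Suc K} \<Longrightarrow> 0 < a K i" using th0 th1 by (auto simp: a_def)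
    show "\<And>i. i \<in> {..Suc K} \<Longrightarrow> finite (V F K i) \<and> V F K i \<noteq> {}" using V_fin_ne F by blast
    show "\<And>i Y. i \<in> {..Suc K} \<Longrightarrow> Y \<in> V F K i \<Longrightarrow> centered_gaussian_rv M Y \<and> (\<integral>\<omega>. (Y \<omega>)\<^sup>2 \<partial>M) \<le> (a K i * (m / (1 - \<theta>)))\<^sup>2"
      using V_gauss F by auto
    show "\<And>\<omega>. \<omega> \<in> space M \<Longrightarrow> (SUP s\<in>F. ennreal (exp (lam * \<bar>X s \<omega>\<bar>))) \<le> ennreal (exp (lam * (\<Sum>i\<le>Suc K. Max ((\<lambda>Y. \<bar>Y \<omega>\<bar>) ` V F K i))))"
    proof (rule SUP_least)
      fix \<omega> s assume "s \<in> F"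
      then have "lam * \<bar>X s \<omega>\<bar> \<le> lam * (\<Sum>i\<le>Suc K. Max ((\<lambda>Y. \<bar>Y \<omega>\<bar>) ` V F K i))"
        using chain_ineq[OF F(1,2)] lam by (intro mult_left_mono) auto
      then show "ennreal (exp (lam * \<bar>X s \<omega>\<bar>)) \<le> ennreal (exp (lam * (\<Sum>i\<le>Suc K. Max ((\<lambda>Y. \<bar>Y \<omega>\<bar>) ` V F K i))))"
        by (intro ennreal_leI) simp
    qed
  qed (use lam in auto)
  have cpos: "i \<le> Suc K \<Longrightarrow> 0 < real (card (V F K i))" for i
    using V_fin_ne[OF F, of K i] by (simp add: card_gt_0_iff)
  have "(\<Sum>i\<le>Suc K. a K i * ln (card (V F K i))) = (\<Sum>i\<le>K. a K i * ln (card (V F K i))) + \<theta> ^ Suc K * ln (card (V F K (Suc K)))"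
    by (simp add: a_def)
  also have "\<dots> \<le> (\<Sum>i\<le>K. (1 - \<theta>) * \<theta> ^ i * ln (n (Suc i))) + \<theta> ^ Suc K * ln (card F)"
  proof (rule add_mono)
    show "(\<Sum>i\<le>K. a K i * ln (card (V F K i))) \<le> (\<Sum>i\<le>K. (1 - \<theta>) * \<theta> ^ i * ln (n (Suc i)))"
    proof (rule sum_mono)
      fix i assume i: "i \<in> {..K}"
      have "ln (card (V F K i)) \<le> ln (n (Suc i))"
        using cpos[of i] V_card[OF F, of i K] i by simp
      then show "a K i * ln (card (V F K i)) \<le> (1 - \<theta>) * \<theta> ^ i * ln (n (Suc i))"
        unfolding a_def using i th0 th1 by (auto intro!: mult_left_mono)
    qed
    have "ln (card (V F K (Suc K))) \<le> ln (card F)"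
      using cpos[of "Suc K"] V_card_last[OF F, of K] by simp
    then show "\<theta> ^ Suc K * ln (card (V F K (Suc K))) \<le> \<theta> ^ Suc K * ln (card F)"
      by (rule mult_left_mono) (use th0 in simp)
  qed
  finally have "exp (\<Sum>i\<le>Suc K. a K i * ln (card (V F K i)))
     \<le> exp ((\<Sum>i\<le>K. (1 - \<theta>) * \<theta> ^ i * ln (n (Suc i))) + \<theta> ^ Suc K * ln (card F))" by simp
  then have "ennreal (2 * exp (lam\<^sup>2 * (m / (1 - \<theta>))\<^sup>2 / 2) * exp (\<Sum>i\<le>Suc K. a K i * ln (card (V F K i))))
     \<le> ennreal (2 * exp (lam\<^sup>2 * (m / (1 - \<theta>))\<^sup>2 / 2)
          * exp ((\<Sum>i\<le>K. (1 - \<theta>) * \<theta> ^ i * ln (n (Suc i))) + \<theta> ^ Suc K * ln (card F)))"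
    by (intro ennreal_leI mult_left_mono) auto
  with cb show ?thesis by (rule order_trans)
qed


lemma finite_bound:
  assumes F: "F \<subseteq> T" "finite F" "F \<noteq> {}" and lam: "lam \<ge> 0"
  shows "(\<integral>\<^sup>+\<omega>. (SUP s\<in>F. ennreal (exp (lam * \<bar>X s \<omega>\<bar>))) \<partial>M)
     \<le> 2 * ennreal (exp (lam\<^sup>2 * m\<^sup>2 / (2 * (1 - \<theta>)\<^sup>2)))
         * gen_inv r (enn2real (I_r r T d (\<theta> * m)) / (\<theta> * m))"
proof -
  define G where "G = gen_inv r (enn2real (I_r r T d (\<theta> * m)) / (\<theta> * m))"
  define B where "B = 2 * ennreal (exp (lam\<^sup>2 * m\<^sup>2 / (2 * (1 - \<theta>)\<^sup>2))) * G"
  define c where "c K = exp (\<theta> ^ Suc K * ln (card F))" for K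
  have ex: "lam\<^sup>2 * (m / (1 - \<theta>))\<^sup>2 / 2 = lam\<^sup>2 * m\<^sup>2 / (2 * (1 - \<theta>)\<^sup>2)"
    by (simp add: power_divide)
  have bnd: "(\<integral>\<^sup>+\<omega>. (SUP s\<in>F. ennreal (exp (lam * \<bar>X s \<omega>\<bar>))) \<partial>M) \<le> B * ennreal (c K)" for K
  proof -
    have "(\<integral>\<^sup>+\<omega>. (SUP s\<in>F. ennreal (exp (lam * \<bar>X s \<omega>\<bar>))) \<partial>M)
      \<le> ennreal (2 * exp (lam\<^sup>2 * (m / (1 - \<theta>))\<^sup>2 / 2)
          * exp ((\<Sum>i\<le>K. (1 - \<theta>) * \<theta> ^ i * ln (n (Suc i))) + \<theta> ^ Suc K * ln (card F)))"
      by (rule core[OF F lam])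
    also have "\<dots> = 2 * ennreal (exp (lam\<^sup>2 * m\<^sup>2 / (2 * (1 - \<theta>)\<^sup>2)))
          * ennreal (exp (\<Sum>i\<le>K. (1 - \<theta>) * \<theta> ^ i * ln (n (Suc i)))) * ennreal (c K)"
      unfolding ex c_def by (simp add: exp_add ennreal_mult mult_ac)
    also have "\<dots> \<le> 2 * ennreal (exp (lam\<^sup>2 * m\<^sup>2 / (2 * (1 - \<theta>)\<^sup>2))) * G * ennreal (c K)"
      unfolding G_def by (intro mult_right_mono mult_left_mono ent) auto
    finally show ?thesis unfolding B_def .
  qed
  have "(\<lambda>K. \<theta> ^ Suc K * ln (card F)) \<longlonglongrightarrow> 0 * ln (card F)"
    by (intro tendsto_intros LIMSEQ_power_zero[THEN LIMSEQ_Suc]) (use th0 th1 in auto)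
  then have "(\<lambda>K. c K) \<longlonglongrightarrow> exp 0" unfolding c_def by (intro tendsto_intros) simp
  then have "(\<lambda>K. ennreal (c K)) \<longlonglongrightarrow> ennreal 1" by (intro tendsto_ennrealI) simp
  then have "(\<lambda>K. B * ennreal (c K)) \<longlonglongrightarrow> B * ennreal 1"
    by (intro tendsto_mult_ennreal tendsto_const) auto
  then have "(\<integral>\<^sup>+\<omega>. (SUP s\<in>F. ennreal (exp (lam * \<bar>X s \<omega>\<bar>))) \<partial>M) \<le> B * ennreal 1"
    by (rule LIMSEQ_le_const) (use bnd in auto)
  then show ?thesis unfolding B_def G_def by simp
qed


lemma part_i:
  assumes lam: "lam > 0"
  shows "(\<integral>\<^sup>+\<omega>. (SUP t\<in>T. ennreal (exp (lam * \<bar>X t \<omega>\<bar>))) \<partial>completion M)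
     \<le> 2 * ennreal (exp (lam\<^sup>2 * m\<^sup>2 / (2 * (1 - \<theta>)\<^sup>2)))
         * gen_inv r (enn2real (I_r r T d (\<theta> * m)) / (\<theta> * m))"
proof -
  define B where "B = 2 * ennreal (exp (lam\<^sup>2 * m\<^sup>2 / (2 * (1 - \<theta>)\<^sup>2)))
         * gen_inv r (enn2real (I_r r T d (\<theta> * m)) / (\<theta> * m))"
  define h where "h t \<omega> = ennreal (exp (lam * \<bar>X t \<omega>\<bar>))" for t \<omega>
  obtain S N where S: "S \<subseteq> T" "countable S" "\<forall>t\<in>T. \<forall>\<epsilon>>0. \<exists>s\<in>S. d s t < \<epsilon>"
    and N: "N \<in> null_sets M"
    and conv: "\<forall>\<omega>\<in>space M - N. \<forall>t\<in>T. \<exists>s.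
          (\<forall>n. s n \<in> S) \<and> (\<lambda>n. d (s n) t) \<longlonglongrightarrow> 0 \<and> (\<lambda>n. X (s n) \<omega>) \<longlonglongrightarrow> X t \<omega>"
    using sepP unfolding separable_process_def by blast
  have Sne: "S \<noteq> {}"
  proof -
    obtain t where "t \<in> T" using Tne by blast
    then obtain s where "s \<in> S" using S(3) by (meson zero_less_one)
    then show ?thesis by blast
  qed
  have ae: "AE \<omega> in M. (SUP t\<in>T. h t \<omega>) = (SUP t\<in>S. h t \<omega>)"
  proof (rule AE_I'[OF N], safe)
    fix \<omega> assume \<omega>: "\<omega> \<in> space M" and ne: "(SUP t\<in>T. h t \<omega>) \<noteq> (SUP t\<in>S. h t \<omega>)"
    show "\<omega> \<in> N"
    proof (rule ccontr)
      assume "\<omega> \<notin> N"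
      then have \<omega>N: "\<omega> \<in> space M - N" using \<omega> by blast
      have "(SUP t\<in>T. h t \<omega>) \<le> (SUP t\<in>S. h t \<omega>)"
      proof (rule SUP_least)
        fix t assume t: "t \<in> T"
        then obtain sq where sq: "\<forall>n. sq n \<in> S" "(\<lambda>n. X (sq n) \<omega>) \<longlonglongrightarrow> X t \<omega>"
          using conv \<omega>N by blast
        have "(\<lambda>n. h (sq n) \<omega>) \<longlonglongrightarrow> h t \<omega>"
          unfolding h_def by (intro tendsto_intros sq(2))
        then show "h t \<omega> \<le> (SUP t\<in>S. h t \<omega>)"
        proof (rule LIMSEQ_le_const2)
          have "\<forall>n\<ge>0. h (sq n) \<omega> \<le> (SUP t\<in>S. h t \<omega>)"
            using sq(1) by (auto intro!: SUP_upper)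
          then show "\<exists>N. \<forall>n\<ge>N. h (sq n) \<omega> \<le> (SUP t\<in>S. h t \<omega>)" by blast
        qed
      qed
      moreover have "(SUP t\<in>S. h t \<omega>) \<le> (SUP t\<in>T. h t \<omega>)"
        using S(1) by (rule SUP_subset_mono) simp
      ultimately show False using ne by simp
    qed
  qed
  define en where "en = from_nat_into S"
  define Fk where "Fk k = en ` {..k}" for k :: nat
  have FkS: "Fk k \<subseteq> S" for k unfolding Fk_def en_def using from_nat_into[OF Sne] by auto
  have Sun: "S = (\<Union>k. Fk k)"
  proof
    show "S \<subseteq> (\<Union>k. Fk k)"
    proof
      fix s assume "s \<in> S"
      then have "s \<in> range en" unfolding en_def using range_from_nat_into[OF Sne S(2)] by simp
      then obtain k where "s = en k" by auto
      then show "s \<in> (\<Union>k. Fk k)" unfolding Fk_def by auto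
    qed
  qed (use FkS in auto)
  have hm: "t \<in> T \<Longrightarrow> (\<lambda>\<omega>. h t \<omega>) \<in> borel_measurable M" for t
  proof -
    assume "t \<in> T"
    then have [measurable]: "X t \<in> borel_measurable M" using gauss_single gauss_meas by blast
    show ?thesis unfolding h_def by measurable
  qed
  have "(\<integral>\<^sup>+\<omega>. (SUP t\<in>T. h t \<omega>) \<partial>completion M) = (\<integral>\<^sup>+\<omega>. (SUP t\<in>T. h t \<omega>) \<partial>M)"
    by (rule nn_integral_completion)
  also have "\<dots> = (\<integral>\<^sup>+\<omega>. (SUP t\<in>S. h t \<omega>) \<partial>M)"
    by (rule nn_integral_cong_AE[OF ae])
  also have "\<dots> = (\<integral>\<^sup>+\<omega>. (SUP k. SUP t\<in>Fk k. h t \<omega>) \<partial>M)"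
    by (subst Sun) (simp add: SUP_UNION)
  also have "\<dots> = (SUP k. \<integral>\<^sup>+\<omega>. (SUP t\<in>Fk k. h t \<omega>) \<partial>M)"
  proof (rule nn_integral_monotone_convergence_SUP)
    show "incseq (\<lambda>k \<omega>. SUP t\<in>Fk k. h t \<omega>)"
      by (intro monoI le_funI SUP_subset_mono) (auto simp: Fk_def)
    fix k
    show "(\<lambda>\<omega>. SUP t\<in>Fk k. h t \<omega>) \<in> borel_measurable M"
      by (rule borel_measurable_SUP) (use FkS S(1) hm in \<open>auto simp: Fk_def\<close>)
  qed
  also have "\<dots> \<le> B"
  proof (rule SUP_least)
    fix k
    show "(\<integral>\<^sup>+\<omega>. (SUP t\<in>Fk k. h t \<omega>) \<partial>M) \<le> B"
      unfolding B_def h_def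
      by (rule finite_bound) (use FkS S(1) lam in \<open>auto simp: Fk_def\<close>)
  qed
  finally show ?thesis unfolding B_def h_def .
qed


lemma sup_exp_ge:
  assumes lam: "lam > 0" and ge: "ereal \<mu> \<le> (SUP t\<in>T. ereal \<bar>X t \<omega>\<bar>)"
  shows "ennreal (exp (lam * \<mu>)) \<le> (SUP t\<in>T. ennreal (exp (lam * \<bar>X t \<omega>\<bar>)))"
proof -
  define H where "H = (SUP t\<in>T. ennreal (exp (lam * \<bar>X t \<omega>\<bar>)))"
  have each: "ennreal (exp (lam * (\<mu> - 1 / Suc k))) \<le> H" for k :: nat
  proof -
    have "ereal (\<mu> - 1 / Suc k) < (SUP t\<in>T. ereal \<bar>X t \<omega>\<bar>)"
      using ge by (rule less_le_trans[rotated]) simp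
    then obtain t where t: "t \<in> T" "ereal (\<mu> - 1 / Suc k) < ereal \<bar>X t \<omega>\<bar>"
      by (auto simp: less_SUP_iff)
    then have "exp (lam * (\<mu> - 1 / Suc k)) \<le> exp (lam * \<bar>X t \<omega>\<bar>)" using lam by simp
    then have "ennreal (exp (lam * (\<mu> - 1 / Suc k))) \<le> ennreal (exp (lam * \<bar>X t \<omega>\<bar>))"
      by (rule ennreal_leI)
    also have "\<dots> \<le> H" unfolding H_def using t(1) by (rule SUP_upper)
    finally show ?thesis .
  qed
  have "(\<lambda>k. 1 / real (Suc k)) \<longlonglongrightarrow> 0" by (rule LIMSEQ_inverse_real_of_nat[unfolded inverse_eq_divide])
  then have "(\<lambda>k. \<mu> - 1 / real (Suc k)) \<longlonglongrightarrow> \<mu> - 0" by (rule tendsto_diff[OF tendsto_const])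
  then have "(\<lambda>k. ennreal (exp (lam * (\<mu> - 1 / real (Suc k))))) \<longlonglongrightarrow> ennreal (exp (lam * (\<mu> - 0)))"
    by (rule tendsto_ennrealI[OF tendsto_exp[OF tendsto_mult[OF tendsto_const]]])
  then have "ennreal (exp (lam * (\<mu> - 0))) \<le> H"
    by (rule LIMSEQ_le_const2) (use each in blast)
  then show ?thesis unfolding H_def by simp
qed

lemma part_ii:
  assumes mu: "\<mu> > 0"
  shows "emeasure (completion M) {\<omega>\<in>space M. (SUP t\<in>T. ereal \<bar>X t \<omega>\<bar>) \<ge> ereal \<mu>}
     \<le> 2 * ennreal (exp (- (\<mu>\<^sup>2 * (1 - \<theta>)\<^sup>2 / (2 * m\<^sup>2))))
         * gen_inv r (enn2real (I_r r T d (\<theta> * m)) / (\<theta> * m))"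
proof -
  define A where "A = {\<omega>\<in>space M. (SUP t\<in>T. ereal \<bar>X t \<omega>\<bar>) \<ge> ereal \<mu>}"
  define Tg where "Tg = 2 * ennreal (exp (- (\<mu>\<^sup>2 * (1 - \<theta>)\<^sup>2 / (2 * m\<^sup>2))))
         * gen_inv r (enn2real (I_r r T d (\<theta> * m)) / (\<theta> * m))"
  define lam where "lam = \<mu> * (1 - \<theta>)\<^sup>2 / m\<^sup>2"
  have lam: "lam > 0" unfolding lam_def using mu th1 mpos by simp
  show ?thesis
  proof (cases "A \<in> sets (completion M)")
    case False
    then show ?thesis unfolding A_def[symmetric] by (simp add: emeasure_notin_sets)
  next
    case True
    have "ennreal (exp (lam * \<mu>)) * emeasure (completion M) A
        = (\<integral>\<^sup>+\<omega>. ennreal (exp (lam * \<mu>)) * indicator A \<omega> \<partial>completion M)"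
      using True by (simp add: nn_integral_cmult_indicator)
    also have "\<dots> \<le> (\<integral>\<^sup>+\<omega>. (SUP t\<in>T. ennreal (exp (lam * \<bar>X t \<omega>\<bar>))) \<partial>completion M)"
    proof (rule nn_integral_mono)
      fix \<omega> show "ennreal (exp (lam * \<mu>)) * indicator A \<omega> \<le> (SUP t\<in>T. ennreal (exp (lam * \<bar>X t \<omega>\<bar>)))"
        using sup_exp_ge[OF lam, of \<mu> \<omega>] by (cases "\<omega> \<in> A") (auto simp: A_def)
    qed
    also have "\<dots> \<le> 2 * ennreal (exp (lam\<^sup>2 * m\<^sup>2 / (2 * (1 - \<theta>)\<^sup>2)))
         * gen_inv r (enn2real (I_r r T d (\<theta> * m)) / (\<theta> * m))"
      by (rule part_i[OF lam])
    also have "lam\<^sup>2 * m\<^sup>2 / (2 * (1 - \<theta>)\<^sup>2) = lam * \<mu> + (- (\<mu>\<^sup>2 * (1 - \<theta>)\<^sup>2 / (2 * m\<^sup>2)))"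
    proof -
      have gen: "(\<mu> * q\<^sup>2 / mm\<^sup>2)\<^sup>2 * mm\<^sup>2 / (2 * q\<^sup>2) = (\<mu> * q\<^sup>2 / mm\<^sup>2) * \<mu> + (- (\<mu>\<^sup>2 * q\<^sup>2 / (2 * mm\<^sup>2)))"
        if "q > 0" "mm > 0" for q mm :: real
        using that by (simp add: field_simps power2_eq_square)
      show ?thesis unfolding lam_def using gen[of "1 - \<theta>" m] mpos th1 by simp
    qed
    also have "2 * ennreal (exp (lam * \<mu> + (- (\<mu>\<^sup>2 * (1 - \<theta>)\<^sup>2 / (2 * m\<^sup>2)))))
         * gen_inv r (enn2real (I_r r T d (\<theta> * m)) / (\<theta> * m)) = ennreal (exp (lam * \<mu>)) * Tg"
    proof -
      have "ennreal (exp (lam * \<mu> + (- (\<mu>\<^sup>2 * (1 - \<theta>)\<^sup>2 / (2 * m\<^sup>2)))))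
          = ennreal (exp (lam * \<mu>)) * ennreal (exp (- (\<mu>\<^sup>2 * (1 - \<theta>)\<^sup>2 / (2 * m\<^sup>2))))"
        by (subst exp_add) (rule ennreal_mult; simp)
      then show ?thesis unfolding Tg_def by (simp only: mult_ac)
    qed
    finally have "ennreal (exp (lam * \<mu>)) * emeasure (completion M) A \<le> ennreal (exp (lam * \<mu>)) * Tg" .
    then have "emeasure (completion M) A \<le> Tg"
      by (subst (asm) ennreal_mult_le_mult_iff) auto
    then show ?thesis unfolding A_def Tg_def .
  qed
qed

end

theorem theorem1:
  fixes M :: "'a measure" and T :: "'t set" and X :: "'t \<Rightarrow> 'a \<Rightarrow> real"
    and r :: "real \<Rightarrow> real"
  assumes "prob_space M"
    and "T \<noteq> {}"
    and "centered_gaussian_process M T X"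
    and "bdd_above ((\<lambda>t. sqrt (\<integral>\<omega>. (X t \<omega>)\<^sup>2 \<partial>M)) ` T)"
    and "m_T M T X > 0"
    and "separable_pm T (rho_X M X)"
    and "separable_process M T (rho_X M X) X"
    and "\<forall>u\<ge>1. r u \<ge> 0"
    and "mono_on {1..} r"
    and "convex_on {0..} (\<lambda>y. r (exp y))"
    and "I_r r T (rho_X M X) (m_T M T X) < \<infinity>"
  shows "(\<forall>\<theta>\<in>{0<..<1}. \<forall>lam>0.
            (\<integral>\<^sup>+ \<omega>. (SUP t\<in>T. ennreal (exp (lam * \<bar>X t \<omega>\<bar>))) \<partial>completion M)
            \<le> 2 * ennreal (exp (lam\<^sup>2 * (m_T M T X)\<^sup>2 / (2 * (1 - \<theta>)\<^sup>2)))
                * gen_inv r (enn2real (I_r r T (rho_X M X) (\<theta> * m_T M T X)) / (\<theta> * m_T M T X)))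
       \<and> (\<forall>\<theta>\<in>{0<..<1}. \<forall>\<mu>>0.
            emeasure (completion M) {\<omega>\<in>space M. (SUP t\<in>T. ereal \<bar>X t \<omega>\<bar>) \<ge> ereal \<mu>}
            \<le> 2 * ennreal (exp (- (\<mu>\<^sup>2 * (1 - \<theta>)\<^sup>2 / (2 * (m_T M T X)\<^sup>2))))
                * gen_inv r (enn2real (I_r r T (rho_X M X) (\<theta> * m_T M T X)) / (\<theta> * m_T M T X)))"
proof -
  have st: "setting M T X r" unfolding setting_def using assms by blast
  show ?thesis
  proof (intro conjI ballI allI impI)
    fix \<theta> lam :: real assume th: "\<theta> \<in> {0<..<1}" and lam: "lam > 0"
    interpret setting_theta M T X r \<theta>
      by (rule setting_theta.intro[OF st]) (unfold_locales, use th in auto)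
    show "(\<integral>\<^sup>+ \<omega>. (SUP t\<in>T. ennreal (exp (lam * \<bar>X t \<omega>\<bar>))) \<partial>completion M)
            \<le> 2 * ennreal (exp (lam\<^sup>2 * (m_T M T X)\<^sup>2 / (2 * (1 - \<theta>)\<^sup>2)))
                * gen_inv r (enn2real (I_r r T (rho_X M X) (\<theta> * m_T M T X)) / (\<theta> * m_T M T X))"
      by (rule part_i[OF lam])
  next
    fix \<theta> \<mu> :: real assume th: "\<theta> \<in> {0<..<1}" and mu: "\<mu> > 0"
    interpret setting_theta M T X r \<theta>
      by (rule setting_theta.intro[OF st]) (unfold_locales, use th in auto)
    show "emeasure (completion M) {\<omega>\<in>space M. (SUP t\<in>T. ereal \<bar>X t \<omega>\<bar>) \<ge> ereal \<mu>}
            \<le> 2 * ennreal (exp (- (\<mu>\<^sup>2 * (1 - \<theta>)\<^sup>2 / (2 * (m_T M T X)\<^sup>2))))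
                * gen_inv r (enn2real (I_r r T (rho_X M X) (\<theta> * m_T M T X)) / (\<theta> * m_T M T X))"
      by (rule part_ii[OF mu])
  qed
qed

end
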